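(* Let $(\bm{W}_0,\bm{D}_0,f_{0,j}:j=1,\ldots,p)$ and $(\bm{W}_1,\bm{D}_0,f_{1,j}:j=1,\ldots,p)$ be two parameter values of the model in the context, sharing the same diagonal matrix $\bm{D}_0$, such that they generate the same distribution of $\bm{Y}_t$. If $\bm{W}_0$ is strictly lower triangular and $\bm{W}_1$ has all diagonal entries zero, then $\bm{W}_0=\bm{W}_1$.
   Context: Model: a $p$-dimensional time series $(\bm{Y}_t)$ satisfies $\bm{Y}_t-\bm{W}\bm{Y}_t=\bm{D}^{1/2}\bm{Z}_t$, where $\bm{W}$ is a $p\times p$ matrix with $\bm{I}-\bm{W}$ invertible, $\bm{D}$ is a diagonal matrix with positive diagonal entries, and $(\bm{Z}_t)$ is a zero-mean stationary Gaussian process whose $p$ components are mutually independent univariate stationary series with unit variance and spectral densities $f_1,\ldots,f_p$. *)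

theory Defs
  imports "HOL-Analysis.Analysis"
begin

text \<open>Matrices are real ^ 'n ^ 'n with a finite, linearly ordered index type 'n
  (the p coordinates, ordered so that "lower triangular" makes sense).\<close>

definition is_diag :: "real^'n^'n \<Rightarrow> bool" where
  "is_diag D \<longleftrightarrow> (\<forall>i j. i \<noteq> j \<longrightarrow> D $ i $ j = 0)"

definition diag_sqrt :: "real^'n^'n \<Rightarrow> real^'n^'n" where
  "diag_sqrt D = (\<chi> i j. if i = j then sqrt (D $ i $ i) else 0)"

definition diag_mat :: "real^'n \<Rightarrow> real^'n^'n" where
  "diag_mat v = (\<chi> i j. if i = j then v $ i else 0)"

text \<open>A spectral density of a real, zero-mean, unit-variance stationary series,
  convention gamma(h) = integral over [-pi,pi] of e^(i h l) f(l) dl.\<close>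
definition unit_spectral_density :: "(real \<Rightarrow> real) \<Rightarrow> bool" where
  "unit_spectral_density f \<longleftrightarrow>
     (\<forall>l. f l \<ge> 0) \<and> (\<forall>l. f (- l) = f l) \<and>
     f integrable_on {-pi..pi} \<and> integral {-pi..pi} f = 1"

definition autocov_of_sd :: "(real \<Rightarrow> real) \<Rightarrow> int \<Rightarrow> real" where
  "autocov_of_sd f h = integral {-pi..pi} (\<lambda>l. cos (real_of_int h * l) * f l)"

text \<open>Valid parameter (W, D, f_1..f_p) of the model Y_t - W Y_t = D^(1/2) Z_t.\<close>
definition valid_param :: "real^'n^'n \<Rightarrow> real^'n^'n \<Rightarrow> ('n \<Rightarrow> real \<Rightarrow> real) \<Rightarrow> bool" where
  "valid_param W D f \<longleftrightarrow>
     invertible (mat 1 - W) \<and> is_diag D \<and> (\<forall>i. D $ i $ i > 0) \<and>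
     (\<forall>j. unit_spectral_density (f j))"

text \<open>Autocovariance Gamma(h) = Cov(Y_{t+h}, Y_t) of
  Y_t = (I - W)^{-1} D^(1/2) Z_t, Z having independent components with
  spectral densities f_j.\<close>
definition model_autocov ::
  "real^'n^'n \<Rightarrow> real^'n^'n \<Rightarrow> ('n \<Rightarrow> real \<Rightarrow> real) \<Rightarrow> int \<Rightarrow> real^'n^'n" where
  "model_autocov W D f h =
     (let A = matrix_inv (mat 1 - W) ** diag_sqrt D
      in A ** diag_mat (\<chi> j. autocov_of_sd (f j) h) ** transpose A)"

text \<open>A zero-mean stationary Gaussian process is determined in distribution by
  its autocovariance function, so two parameters generate the same law of (Y_t)
  iff their autocovariance functions coincide at every lag.\<close>
definition same_distribution ::
  "real^'n^'n \<Rightarrow> real^'n^'n \<Rightarrow> ('n \<Rightarrow> real \<Rightarrow> real) \<Rightarrow>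
   real^'n^'n \<Rightarrow> real^'n^'n \<Rightarrow> ('n \<Rightarrow> real \<Rightarrow> real) \<Rightarrow> bool" where
  "same_distribution W0 D0 f0 W1 D1 f1 \<longleftrightarrow>
     (\<forall>h. model_autocov W0 D0 f0 h = model_autocov W1 D1 f1 h)"

definition strictly_lower_triangular :: "real^('n::{finite,linorder})^('n::{finite,linorder}) \<Rightarrow> bool" where
  "strictly_lower_triangular W \<longleftrightarrow> (\<forall>i j. i \<le> j \<longrightarrow> W $ i $ j = 0)"

end

theory Submission
  imports Defs
begin

lemma minv:
  fixes A :: "real^'n^'n"
  assumes "invertible A"
  shows "A ** matrix_inv A = mat 1" "matrix_inv A ** A = mat 1"
proof -
  have "\<exists>A'. A ** A' = mat 1 \<and> A' ** A = mat 1" using assms by (simp add: invertible_def)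
  then have "A ** matrix_inv A = mat 1 \<and> matrix_inv A ** A = mat 1"
    unfolding matrix_inv_def by (rule someI_ex)
  then show "A ** matrix_inv A = mat 1" "matrix_inv A ** A = mat 1" by auto
qed

lemma sqrt_sq:
  fixes D :: "real^'n^'n"
  assumes "is_diag D" "\<forall>i. D $ i $ i > 0"
  shows "diag_sqrt D ** transpose (diag_sqrt D) = D"
proof -
  have "(diag_sqrt D ** transpose (diag_sqrt D)) $ i $ j = D $ i $ j" for i j
  proof (cases "i = j")
    case True
    have "(diag_sqrt D ** transpose (diag_sqrt D)) $ i $ j
        = (\<Sum>k\<in>UNIV. (if i = k then sqrt (D $ i $ i) * sqrt (D $ i $ i) else 0))"
      unfolding matrix_matrix_mult_def transpose_def diag_sqrt_def vec_lambda_beta using True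
      by (intro sum.cong) auto
    also have "\<dots> = sqrt (D $ i $ i) * sqrt (D $ i $ i)" by simp
    also have "\<dots> = D $ i $ i" using assms(2) by (simp add: less_imp_le)
    finally show ?thesis using True by simp
  next
    case False
    have "(diag_sqrt D ** transpose (diag_sqrt D)) $ i $ j = 0"
      using False by (auto simp: matrix_matrix_mult_def transpose_def diag_sqrt_def intro!: sum.neutral)
    then show ?thesis using False assms(1) by (simp add: is_diag_def)
  qed
  then show ?thesis by (simp add: vec_eq_iff)
qed

lemma mid0:
  assumes "\<forall>j. unit_spectral_density (f j)"
  shows "diag_mat (\<chi> j. autocov_of_sd (f j) 0) = (mat 1 :: real^'n^'n)"
proof -
  have "autocov_of_sd (f j) 0 = 1" for j
    using assms unfolding autocov_of_sd_def unit_spectral_density_def by simp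
  then show ?thesis by (simp add: diag_mat_def mat_def vec_eq_iff)
qed

lemma gamma0:
  fixes W D :: "real^'n^'n"
  assumes "valid_param W D f"
  shows "model_autocov W D f 0 = matrix_inv (mat 1 - W) ** D ** transpose (matrix_inv (mat 1 - W))"
proof -
  have m: "diag_mat (\<chi> j. autocov_of_sd (f j) 0) = (mat 1 :: real^'n^'n)"
    using assms mid0 unfolding valid_param_def by blast
  have s: "diag_sqrt D ** transpose (diag_sqrt D) = D"
    using assms sqrt_sq unfolding valid_param_def by blast
  show ?thesis unfolding model_autocov_def Let_def m matrix_mul_rid matrix_transpose_mul
    by (metis s matrix_mul_assoc)
qed

lemma entry:
  fixes C D :: "real^'n^'n"
  assumes "is_diag D"
  shows "(C ** D ** transpose C) $ i $ j = (\<Sum>l\<in>UNIV. C $ i $ l * D $ l $ l * C $ j $ l)"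
proof -
  have "(C ** D) $ i $ l = C $ i $ l * D $ l $ l" for l
  proof -
    have "(C ** D) $ i $ l = (\<Sum>k\<in>UNIV. if k = l then C $ i $ k * D $ k $ l else 0)"
      unfolding matrix_matrix_mult_def vec_lambda_beta using assms by (intro sum.cong) (auto simp: is_diag_def)
    then show ?thesis by (simp add: sum.delta')
  qed
  then show ?thesis by (simp add: matrix_matrix_mult_def transpose_def)
qed

theorem lemma1:
  fixes W0 W1 D0 :: "real^('n::{finite,linorder})^('n::{finite,linorder})"
    and f0 f1 :: "'n \<Rightarrow> real \<Rightarrow> real"
  assumes "valid_param W0 D0 f0"
    and "valid_param W1 D0 f1"
    and "same_distribution W0 D0 f0 W1 D0 f1"
    and "strictly_lower_triangular W0"
    and "\<forall>i. W1 $ i $ i = 0"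
  shows "W0 = W1"
proof -
  define B0 where "B0 = mat 1 - W0"
  define B1 where "B1 = mat 1 - W1"
  define C where "C = B1 ** matrix_inv B0"
  have i0: "invertible B0" and i1: "invertible B1" and dg: "is_diag D0"
    and pos: "\<forall>i. D0 $ i $ i > 0"
    using assms(1,2) by (auto simp: valid_param_def B0_def B1_def)
  have eq: "matrix_inv B0 ** D0 ** transpose (matrix_inv B0) = matrix_inv B1 ** D0 ** transpose (matrix_inv B1)"
  proof -
    have "model_autocov W0 D0 f0 0 = model_autocov W1 D0 f1 0"
      using assms(3) unfolding same_distribution_def by blast
    then show ?thesis unfolding gamma0[OF assms(1)] gamma0[OF assms(2)] B0_def B1_def .
  qed
  have t1: "transpose (matrix_inv B1) ** transpose B1 = mat 1"
  proof -
    have "transpose (matrix_inv B1) ** transpose B1 = transpose (B1 ** matrix_inv B1)"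
      by (simp only: matrix_transpose_mul)
    also have "\<dots> = mat 1" by (simp only: minv(1)[OF i1] transpose_mat)
    finally show ?thesis .
  qed
  have CDC: "C ** D0 ** transpose C = D0"
  proof -
    have "C ** D0 ** transpose C = B1 ** (matrix_inv B0 ** D0 ** transpose (matrix_inv B0)) ** transpose B1"
      unfolding C_def matrix_transpose_mul by (simp add: matrix_mul_assoc)
    also have "\<dots> = B1 ** (matrix_inv B1 ** D0 ** transpose (matrix_inv B1)) ** transpose B1"
      using eq by simp
    also have "\<dots> = (B1 ** matrix_inv B1) ** D0 ** (transpose (matrix_inv B1) ** transpose B1)"
      by (simp add: matrix_mul_assoc)
    also have "\<dots> = D0" using minv(1)[OF i1] t1 by simp
    finally show ?thesis .
  qed
  have CB: "C ** B0 = B1"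
  proof -
    have "C ** B0 = B1 ** (matrix_inv B0 ** B0)" unfolding C_def by (simp only: matrix_mul_assoc)
    then show ?thesis by (simp only: minv(2)[OF i0] matrix_mul_rid)
  qed
  have E: "(\<Sum>l\<in>UNIV. C $ i $ l * D0 $ l $ l * C $ j $ l) = D0 $ i $ j" for i j
    using CDC entry[OF dg, of C i j] by simp
  have B0e: "B0 $ l $ j = (if l = j then 1 else 0)" if "l \<le> j" for l j
    using assms(4) that unfolding B0_def strictly_lower_triangular_def by (simp add: mat_def)
  have B1d: "B1 $ j $ j = 1" for j
    using assms(5) unfolding B1_def by (simp add: mat_def)
  define P where "P j \<longleftrightarrow> (\<forall>l. C $ j $ l = (if l = j then 1 else 0))" for j
  have allP: "\<forall>j. P j"
  proof (rule ccontr)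
    assume "\<not> (\<forall>j. P j)"
    then have ne: "{j. \<not> P j} \<noteq> {}" by auto
    define j where "j = Max {j. \<not> P j}"
    have nPj: "\<not> P j" unfolding j_def using ne Max_in[of "{j. \<not> P j}"] by auto
    have Pk: "P k" if "j < k" for k
    proof (rule ccontr)
      assume "\<not> P k"
      then have "k \<le> j" unfolding j_def by (intro Max_ge) auto
      then show False using that by simp
    qed
    have Cjk: "C $ j $ k = 0" if "j < k" for k
    proof -
      have "\<forall>l. C $ k $ l * D0 $ l $ l * C $ j $ l = (if l = k then C $ j $ k * D0 $ k $ k else 0)"
        using Pk[OF that] unfolding P_def by auto
      then have "(\<Sum>l\<in>UNIV. C $ k $ l * D0 $ l $ l * C $ j $ l) = (\<Sum>l\<in>UNIV. if l = k then C $ j $ k * D0 $ k $ k else 0)"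
        by (intro sum.cong) auto
      then have "(\<Sum>l\<in>UNIV. C $ k $ l * D0 $ l $ l * C $ j $ l) = C $ j $ k * D0 $ k $ k"
        by (simp only: sum.delta') simp
      moreover have "D0 $ k $ j = 0" using dg that unfolding is_diag_def by auto
      ultimately have "C $ j $ k * D0 $ k $ k = 0" using E[of k j] by simp
      moreover have "D0 $ k $ k \<noteq> 0" using pos[rule_format, of k] by simp
      ultimately show ?thesis by simp
    qed
    have "(C ** B0) $ j $ j = (\<Sum>l\<in>UNIV. if l = j then C $ j $ l else 0)"
      unfolding matrix_matrix_mult_def vec_lambda_beta
    proof (rule sum.cong)
      fix l assume "l \<in> (UNIV :: 'n set)"
      show "C $ j $ l * B0 $ l $ j = (if l = j then C $ j $ l else 0)"
      proof (cases "l \<le> j")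
        case True then show ?thesis using B0e[OF True] by simp
      next
        case False then show ?thesis using Cjk[of l] by simp
      qed
    qed simp
    then have Cjj: "C $ j $ j = 1" using CB B1d[of j] by (simp add: sum.delta')
    have s1: "(\<Sum>l\<in>UNIV. C $ j $ l * D0 $ l $ l * C $ j $ l)
       = C $ j $ j * D0 $ j $ j * C $ j $ j + (\<Sum>l\<in>UNIV - {j}. C $ j $ l * D0 $ l $ l * C $ j $ l)"
      by (rule sum.remove) simp_all
    have z0: "(\<Sum>l\<in>UNIV - {j}. C $ j $ l * D0 $ l $ l * C $ j $ l) = 0"
      using s1 E[of j j] Cjj by simp
    have "(\<Sum>l\<in>UNIV - {j}. C $ j $ l * D0 $ l $ l * C $ j $ l) = (\<Sum>l\<in>UNIV - {j}. (C $ j $ l)^2 * D0 $ l $ l)"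
      by (rule sum.cong) (simp_all add: power2_eq_square)
    with z0 have z: "(\<Sum>l\<in>UNIV - {j}. (C $ j $ l)^2 * D0 $ l $ l) = 0" by simp
    have nn: "\<forall>l\<in>UNIV - {j}. 0 \<le> (C $ j $ l)^2 * D0 $ l $ l"
      using pos by (simp add: less_imp_le)
    have fin: "finite (UNIV - {j})" by simp
    have iff: "(\<Sum>l\<in>UNIV - {j}. (C $ j $ l)^2 * D0 $ l $ l) = 0 \<longleftrightarrow> (\<forall>l\<in>UNIV - {j}. (C $ j $ l)^2 * D0 $ l $ l = 0)"
      by (rule sum_nonneg_eq_0_iff[OF fin]) (use nn in blast)
    have "\<forall>l\<in>UNIV - {j}. (C $ j $ l)^2 * D0 $ l $ l = 0"
      using iff z by blast
    then have "\<forall>l. l \<noteq> j \<longrightarrow> C $ j $ l = 0"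
    proof (intro allI impI)
      fix l assume a: "\<forall>l\<in>UNIV - {j}. (C $ j $ l)^2 * D0 $ l $ l = 0" and lj: "l \<noteq> j"
      then have "(C $ j $ l)^2 * D0 $ l $ l = 0" by blast
      moreover have "D0 $ l $ l \<noteq> 0" using pos[rule_format, of l] by simp
      ultimately show "C $ j $ l = 0" by simp
    qed
    then have "P j" unfolding P_def using Cjj by auto
    then show False using nPj by simp
  qed
  then have "C = mat 1" unfolding P_def by (simp add: vec_eq_iff mat_def)
  then have "B0 = B1" using CB by simp
  then show ?thesis unfolding B0_def B1_def by simp
qed

end
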